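(* Let $n\ge 3$ and let $P=(A_1,\dots,A_n)$ be a cyclic $n$-gon in the plane (distinct vertices lying on a circle) whose vertices are ordered anticlockwise around the circle. Then for all $a,b\in\{1,\dots,n\}$ (including the cases $b=a$, $b=a+1$ and $b=a-1$), with all indices taken modulo $n$ in $\{1,\dots,n\}$, the following three determinants vanish: \[ \begin{vmatrix} x_{b,b+1} & S_{a,b,b+1} & S_{a+1,b,b+1}\\ -x_{a,a+1} & S_{a,a+1,b} & S_{a,a+1,b+1}\\ 0 & x_{a,b} & x_{a+1,b+1} \end{vmatrix} = 0,\qquad \begin{vmatrix} x_{b,b+1} & S_{a,b,b+1} & S_{a+1,b,b+1}\\ x_{a,a+1} & S_{a,a+1,b+1} & S_{a,a+1,b}\\ 0 & x_{a,b+1} & x_{a+1,b} \end{vmatrix} = 0,\] \[\begin{vmatrix} x_{a+1,b} & S_{a,a+1,b} & S_{a+1,b,b+1}\\ -x_{a,b+1} & S_{a,b,b+1} & S_{a,a+1,b+1}\\ 0 & x_{a,b} & x_{a+1,b+1} \end{vmatrix} = 0.\] (Equivalently: these determinants vanish for every diamond, including the gluing diamonds, of the plane polygonal Heronian frieze of $P$, the diamond for $(a,b)$ being the one associated with the quadruple of vertices $(A_a,A_{a+1},A_b,A_{b+1})$.)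
   Context: For points $A_p=(x_p,y_p)$ in the plane, $x_{pq}:=(x_q-x_p)^2+(y_q-y_p)^2$ is the squared distance between $A_p$ and $A_q$ (so $x_{pp}=0$), and $S_{pqr}:=2[(x_q-x_p)(y_r-y_p)-(y_q-y_p)(x_r-x_p)]$ is four times the signed area of the triangle $A_pA_qA_r$ (so it vanishes if two of $p,q,r$ coincide, and is positive for anticlockwise-ordered vertices). *)

theory Defs
  imports Complex_Main
begin

text \<open>A plane polygon is given by coordinate functions px py, vertex A_i = (px i, py i), i = 1..n.\<close>

definition sqd :: "(nat \<Rightarrow> real) \<Rightarrow> (nat \<Rightarrow> real) \<Rightarrow> nat \<Rightarrow> nat \<Rightarrow> real" where
  "sqd px py p q = (px q - px p)^2 + (py q - py p)^2"

definition Sarea :: "(nat \<Rightarrow> real) \<Rightarrow> (nat \<Rightarrow> real) \<Rightarrow> nat \<Rightarrow> nat \<Rightarrow> nat \<Rightarrow> real" where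
  "Sarea px py p q r = 2 * ((px q - px p) * (py r - py p) - (py q - py p) * (px r - px p))"

definition modn :: "nat \<Rightarrow> nat \<Rightarrow> nat" where
  "modn n k = ((k + n - 1) mod n) + 1"

definition det3 :: "real \<Rightarrow> real \<Rightarrow> real \<Rightarrow> real \<Rightarrow> real \<Rightarrow> real \<Rightarrow> real \<Rightarrow> real \<Rightarrow> real \<Rightarrow> real" where
  "det3 a11 a12 a13 a21 a22 a23 a31 a32 a33 =
     a11 * (a22 * a33 - a23 * a32) - a12 * (a21 * a33 - a23 * a31) + a13 * (a21 * a32 - a22 * a31)"

text \<open>Cyclic n-gon with distinct vertices on a circle, ordered anticlockwise:
  the vertices are at strictly increasing angles within one full turn.\<close>
definition cyclic_anticlockwise :: "nat \<Rightarrow> (nat \<Rightarrow> real) \<Rightarrow> (nat \<Rightarrow> real) \<Rightarrow> bool" where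
  "cyclic_anticlockwise n px py \<longleftrightarrow>
     (\<exists>cx cy r (\<theta>::nat \<Rightarrow> real). r > 0 \<and>
        (\<forall>i\<in>{1..n}. px i = cx + r * cos (\<theta> i) \<and> py i = cy + r * sin (\<theta> i)) \<and>
        (\<forall>i\<in>{1..<n}. \<theta> i < \<theta> (Suc i)) \<and> \<theta> n < \<theta> 1 + 2 * pi)"

end

theory Submission
  imports Defs
begin

lemma cert1:
  fixes x1 y1 x2 y2 x3 y3 x4 y4 cx cy k :: real
  assumes h1: "(x1-cx)^2+(y1-cy)^2=k" and h2: "(x2-cx)^2+(y2-cy)^2=k" and h3: "(x3-cx)^2+(y3-cy)^2=k" and h4: "(x4-cx)^2+(y4-cy)^2=k"
  shows "det3 (((x4 - x3)^2 + (y4 - y3)^2)) ((2 * ((x3 - x1) * (y4 - y1) - (y3 - y1) * (x4 - x1)))) ((2 * ((x3 - x2) * (y4 - y2) - (y3 - y2) * (x4 - x2)))) (- ((x2 - x1)^2 + (y2 - y1)^2)) ((2 * ((x2 - x1) * (y3 - y1) - (y2 - y1) * (x3 - x1)))) ((2 * ((x2 - x1) * (y4 - y1) - (y2 - y1) * (x4 - x1)))) 0 (((x3 - x1)^2 + (y3 - y1)^2)) (((x4 - x2)^2 + (y4 - y2)^2)) = 0"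
proof -
  define U1 where "U1 = x1 - cx"
  define U2 where "U2 = x2 - cx"
  define U3 where "U3 = x3 - cx"
  define U4 where "U4 = x4 - cx"
  define W1 where "W1 = y1 - cy"
  define W2 where "W2 = y2 - cy"
  define W3 where "W3 = y3 - cy"
  define W4 where "W4 = y4 - cy"
  have e: "x1 = U1 + cx" "x2 = U2 + cx" "x3 = U3 + cx" "x4 = U4 + cx" "y1 = W1 + cy" "y2 = W2 + cy" "y3 = W3 + cy" "y4 = W4 + cy" by (simp_all add: U1_def U2_def U3_def U4_def W1_def W2_def W3_def W4_def)
  have z: "U1^2+W1^2-k = 0" "U2^2+W2^2-k = 0" "U3^2+W3^2-k = 0" "U4^2+W4^2-k = 0" using h1 h2 h3 h4 by (simp_all add: U1_def U2_def U3_def U4_def W1_def W2_def W3_def W4_def)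
  have "det3 (((x4 - x3)^2 + (y4 - y3)^2)) ((2 * ((x3 - x1) * (y4 - y1) - (y3 - y1) * (x4 - x1)))) ((2 * ((x3 - x2) * (y4 - y2) - (y3 - y2) * (x4 - x2)))) (- ((x2 - x1)^2 + (y2 - y1)^2)) ((2 * ((x2 - x1) * (y3 - y1) - (y2 - y1) * (x3 - x1)))) ((2 * ((x2 - x1) * (y4 - y1) - (y2 - y1) * (x4 - x1)))) 0 (((x3 - x1)^2 + (y3 - y1)^2)) (((x4 - x2)^2 + (y4 - y2)^2)) = (2*U2*U4^2*W4 - 2*W1*U2*U4^2 - 2*U3*U4^2*W4 + 2*W2*U4^3 - 2*U1*W2*U4^2 + 8*U3^2*U4*W4 - 4*U1*U3*U4*W4 - 8*W2*U3^2*U4 + 8*U1*W2*U3*U4 + 2*W1*U3*U4^2 - 8*U2*U3^2*W4 + 2*W1*U2*U3^2 - 6*U3^3*W4 + 6*U1*U3^2*W4 + 6*W2*U3^3 - 6*U1*W2*U3^2 - 2*W1*U3^2*U4 + 2*U2*W4^3 + 2*W1*U2*W4^2 - 2*U3*W4^3 + 2*W2*U4*W4^2 + 2*U1*W2*W4^2 - 8*W1*U2*W3*W4 + 8*U3*W3*W4^2 - 2*U1*W3*W4^2 - 8*W2*U3*W3*W4 + 4*W1*W3*U4*W4 + 6*W1*U2*W3^2 - 6*U3*W3^2*W4 + 2*U1*W3^2*W4 + 6*W2*U3*W3^2 - 2*U1*W2*W3^2 - 6*W1*W3^2*U4 + 8*U2^2*U3*W4 - 2*W1*U2^2*U3 -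 2*W1*U3*W4^2 + 8*W1*W2*U3*W4 - 6*W1*W2^2*U3 - 8*U2^2*U4*W4 + 6*U2^3*W4 - 8*U2*W2*W4^2 + 6*U2*W2^2*W4 + 4*U1*U2*U4*W4 - 6*U1*U2^2*W4 - 2*U1*W2^2*W4 - 2*W3*U4^3 + 8*U2^2*W3*U4 - 2*W3*U4*W4^2 - 6*U2^3*W3 + 8*U2*W2*W3*W4 - 6*U2*W2^2*W3 + 2*U1*W3*U4^2 - 8*U1*U2*W3*U4 + 6*U1*U2^2*W3 + 2*U1*W2^2*W3 + 2*W1*U2^2*U4 - 4*W1*W2*U4*W4 + 6*W1*W2^2*U4 - 2*U1^2*U3*W4 + 4*W1*U3*W3*W4 - 2*W1^2*U3*W4 + 2*U2^2*W2*U3 + 8*U2*W2*U3^2 - 4*U1*U2*W2*U3 + 2*U1^2*W2*U3 - 4*W1*W2*U3*W3 + 2*W1^2*W2*U3 + 2*W2^3*U3 + 2*U1^2*U2*W4 + 2*W1^2*U2*W4 - 4*W1*U2*W2*W4 + 8*U2*U3*W3*U4 + 2*U3^2*W3*U4 - 4*U1*U3*W3*U4 + 2*U1^2*W3*U4 + 2*W3^3*U4 + 2*W1^2*W3*U4 - 8*U2^2*U3*W3 - 2*U2*U3^2*W3 + 4*U1*U2*U3*W3 - 2*U1^2*U2*W3 - 2*U2*W3^3 - 2*W1^2*U2*W3 + 4*W1*U2*W2*W3 - 2*U2^2*W2*U4 - 8*U2*W2*U3*U4 + 4*U1*U2*W2*U4 - 2*U1^2*W2*U4 - 2*W1^2*W2*U4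 - 2*W2^3*U4 - 2*U3*W4*k + 2*W2*U3*k + 2*U2*W4*k + 2*W3*U4*k - 2*U2*W3*k - 2*W2*U4*k) * (U1^2+W1^2-k) + (-6*W3*U4^3 + 6*U2*W3*U4^2 + 6*W1*U4^3 - 6*W1*U2*U4^2 - 8*U1*W3*U4^2 - 2*W2*U3*U4^2 + 2*U1*W2*U4^2 - 8*W1*U3*U4^2 + 8*U3*W3*U4^2 - 4*U2*U3*W3*U4 + 8*W1*U2*U3*U4 + 2*W2*U3^2*U4 - 2*U3^2*W3*U4 - 2*W1*U2*U3^2 + 2*U1*U3^2*W3 - 2*U1*W2*U3^2 + 2*W1*U3^3 - 6*W3*U4*W4^2 + 2*U2*W3*W4^2 + 6*W1*U4*W4^2 - 2*W1*U2*W4^2 - 6*W2*U3*W4^2 + 6*U1*W2*W4^2 + 8*W3^2*U4*W4 - 2*U2*W3^2*W4 - 8*W1*W3*U4*W4 + 4*W2*U3*W3*W4 - 8*U1*W2*W3*W4 - 2*W3^3*U4 + 2*W1*U2*W3^2 + 2*U1*W3^3 + 2*U1*W2*W3^2 + 2*W1*U3*W3^2 + 2*U3*U4^2*W4 - 4*U2*U3*U4*W4 + 2*U2^2*U3*W4 + 2*U3*W4^3 + 2*W2^2*U3*W4 + 8*U1*U3*U4*W4 - 8*U1*U2*U3*W4 - 2*W1*U2^2*U3 - 2*W1*W2^2*U3 - 8*U1*W1*U3*U4 + 4*U1*W1*U2*U3 + 4*W1^2*W2*U3 - 2*U1*U4^2*W4 + 4*U1*U2*U4*W4 - 2*U1*U2^2*W4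 - 2*U1*W4^3 - 2*U1*W2^2*W4 + 4*U1*W1*W2*W4 - 2*U2^2*W3*U4 + 4*W2*W3*U4*W4 - 2*W2^2*W3*U4 + 8*W1*W2*W3*U4 + 2*U1*U2^2*W3 + 2*U1*W2^2*W3 - 4*U1*W1*W2*W3 + 2*W1*U2^2*U4 - 4*W1*W2*U4*W4 + 2*W1*W2^2*U4 + 8*U1*W1*U4^2 - 4*U1*W1*U2*U4 - 4*W1^2*W2*U4 - 2*U3^3*W4 - 2*U3*W3^2*W4 - 4*W1*W2*U3*W3 + 2*U2*U3^2*W4 - 4*W1^2*U2*W4 + 8*U1*W1*W3*W4 + 4*U1*U2*U3*W3 + 4*W1^2*U2*W3 - 8*U1*W1*W3^2 - 2*W2*W3^2*U4 + 10*U3*W4*k - 8*W1^2*U3*W4 - 4*W1*U3*k - 8*U1*W4*k - 8*U4*W4*k + 8*W1^2*U4*W4 + 6*U2*W4*k + 6*W3*U4*k - 8*W1^2*W3*U4 + 8*U1*W3*k - 6*U2*W3*k + 4*W1*U4*k + 2*W2*U3*k - 8*U3*W3*k + 8*W1^2*U3*W3 - 2*W2*U4*k) * (U2^2+W2^2-k) + (-2*U2*U4^2*W4 + 8*W1*U2*U4^2 + 2*U1*U4^2*W4 + 6*W2*U4^3 + 8*U1*W2*U4^2 - 6*W1*U4^3 - 8*U2*W2*U4^2 + 6*W2*U4*W4^2 - 8*W2^2*U4*W4 - 6*W1*U4*W4^2 + 8*W1*W2*U4*W4 + 4*U2*U3*U4*W4 - 8*U1*U2*U4*W4 - 8*W1*U2*U3*U4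 + 8*U1*W1*U2*U4 - 4*U1*U3*U4*W4 - 6*W2*U3*U4^2 + 6*W1*U3*U4^2 - 8*U1*W1*U4^2 + 2*U2*W3*U4^2 + 6*U2*W3*W4^2 - 4*U2*W2*W3*W4 - 2*U1*W3*U4^2 - 6*U1*W3*W4^2 + 8*U1*W2*W3*W4 - 4*U1*W2^2*W3 + 4*U2*W2*U3*U4 - 2*W2*U3*W4^2 + 4*W2^2*U3*W4 + 2*W1*U3*W4^2 - 4*W1*W2^2*U3 - 2*U2*U3^2*W4 + 8*U1*U2*U3*W4 - 2*U2*W3^2*W4 + 2*W1*U2*U3^2 - 4*U1*W1*U2*U3 + 2*W1*U2*W3^2 - 4*W1^2*U2*W3 + 2*U1*U3^2*W4 + 2*U1*W3^2*W4 - 4*U1*W1*W3*W4 + 2*W2*U3^2*U4 + 2*W2*W3^2*U4 - 8*W1*W2*W3*U4 - 2*U1*W2*U3^2 - 2*U1*W2*W3^2 + 4*U1*W1*W2*W3 - 2*W1*U3^2*U4 + 4*U1*W1*U3*U4 - 2*W1*W3^2*U4 + 4*W1^2*W3*U4 - 2*U2*W4^3 + 2*U1*W4^3 - 4*W2*W3*U4*W4 + 4*W1*W3*U4*W4 - 8*U1*W1*W2*W4 + 4*W1^2*U3*W4 - 4*U1*U2*W2*U3 + 8*U1*W1*W2^2 - 4*W1^2*W2*U3 + 4*W2^2*W3*U4 + 4*W1*U2*W2*W3 - 4*W2*U4*k + 8*U4*W4*k - 8*W1^2*U4*W4 + 8*W1^2*W2*U4 + 2*U1*W3*k - 10*U1*W2*k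 + 2*W1*U3*k - 8*U2*W4*k + 8*W1^2*U2*W4 + 2*W1*U2*k + 8*U1*W4*k - 8*U3*W4*k + 6*W2*U3*k - 4*W1*U4*k + 8*U2*W2*k - 8*W1^2*U2*W2 - 2*U2*W3*k) * (U3^2+W3^2-k) + (2*U2*W3*U4^2 + 2*U2*W3*W4^2 - 4*U2*W2*W3*W4 - 2*W1*U2*U4^2 - 2*W1*U2*W4^2 + 4*W1*U2*W2*W4 - 2*U1*W3*U4^2 + 8*U1*U2*W3*U4 - 2*U1*W3*W4^2 - 2*W2*U3*U4^2 + 4*U2*W2*U3*U4 - 2*W2*U3*W4^2 + 4*W2^2*U3*W4 + 2*U1*W2*U4^2 - 4*U1*U2*W2*U4 + 2*U1*W2*W4^2 - 4*U1*W2^2*W4 + 2*W1*U3*U4^2 + 2*W1*U3*W4^2 - 8*W1*W2*U3*W4 - 4*U2*W3^2*W4 + 8*W1*U2*W3*W4 - 4*W1^2*U2*W4 + 4*U1*W3^2*W4 - 4*U1*W1*W3*W4 - 8*U1*W2*U3*U4 - 4*W2*W3^2*U4 - 4*W1^2*W2*U4 + 4*U1*W1*U3*U4 + 4*W1*W3^2*U4 + 4*W1^2*W3*U4 - 4*U2*U3*W3*U4 + 4*U1*U3*W3*U4 - 8*U1*U2*U3*W3 + 8*U1*U2*W2*U3 + 8*W1*W2*U3*W3 - 8*W1^2*U3*W3 + 4*W2*U3*W3*W4 - 4*W1*U3*W3*W4 + 4*W1^2*U3*W4 + 4*U1*W1*W2*W4 + 4*W2^2*W3*U4 - 8*W1*U2*W2*W3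 - 4*U1*W1*U2*U4 - 4*W1*W2^2*U4 + 8*W1^2*U2*W2 + 10*U2*W3*k - 8*W3*U4*k - 10*U1*W3*k + 8*U1*W2^2*W3 - 10*W2*U3*k + 10*U1*W2*k + 8*W1*W2^2*U3 - 8*W1*U2*W3^2 - 2*W1*U2*k + 8*W2*U4*k - 8*U1*W2*W3^2 + 8*U3*W3*k - 8*W2^2*U3*W3 - 8*U2*W2*k + 8*U2*W2*W3^2 + 8*U1*W1*W3^2 + 2*W1*U3*k - 8*U1*W1*W2^2) * (U4^2+W4^2-k)"
    unfolding e det3_def by algebra
  also have "... = 0" unfolding z by simp
  finally show ?thesis .
qed

lemma cert2:
  fixes x1 y1 x2 y2 x3 y3 x4 y4 cx cy k :: real
  assumes h1: "(x1-cx)^2+(y1-cy)^2=k" and h2: "(x2-cx)^2+(y2-cy)^2=k" and h3: "(x3-cx)^2+(y3-cy)^2=k" and h4: "(x4-cx)^2+(y4-cy)^2=k"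
  shows "det3 (((x4 - x3)^2 + (y4 - y3)^2)) ((2 * ((x3 - x1) * (y4 - y1) - (y3 - y1) * (x4 - x1)))) ((2 * ((x3 - x2) * (y4 - y2) - (y3 - y2) * (x4 - x2)))) (((x2 - x1)^2 + (y2 - y1)^2)) ((2 * ((x2 - x1) * (y4 - y1) - (y2 - y1) * (x4 - x1)))) ((2 * ((x2 - x1) * (y3 - y1) - (y2 - y1) * (x3 - x1)))) 0 (((x4 - x1)^2 + (y4 - y1)^2)) (((x3 - x2)^2 + (y3 - y2)^2)) = 0"
proof -
  define U1 where "U1 = x1 - cx"
  define U2 where "U2 = x2 - cx"
  define U3 where "U3 = x3 - cx"
  define U4 where "U4 = x4 - cx"
  define W1 where "W1 = y1 - cy"
  define W2 where "W2 = y2 - cy"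
  define W3 where "W3 = y3 - cy"
  define W4 where "W4 = y4 - cy"
  have e: "x1 = U1 + cx" "x2 = U2 + cx" "x3 = U3 + cx" "x4 = U4 + cx" "y1 = W1 + cy" "y2 = W2 + cy" "y3 = W3 + cy" "y4 = W4 + cy" by (simp_all add: U1_def U2_def U3_def U4_def W1_def W2_def W3_def W4_def)
  have z: "U1^2+W1^2-k = 0" "U2^2+W2^2-k = 0" "U3^2+W3^2-k = 0" "U4^2+W4^2-k = 0" using h1 h2 h3 h4 by (simp_all add: U1_def U2_def U3_def U4_def W1_def W2_def W3_def W4_def)
  have "det3 (((x4 - x3)^2 + (y4 - y3)^2)) ((2 * ((x3 - x1) * (y4 - y1) - (y3 - y1) * (x4 - x1)))) ((2 * ((x3 - x2) * (y4 - y2) - (y3 - y2) * (x4 - x2)))) (((x2 - x1)^2 + (y2 - y1)^2)) ((2 * ((x2 - x1) * (y4 - y1) - (y2 - y1) * (x4 - x1)))) ((2 * ((x2 - x1) * (y3 - y1) - (y2 - y1) * (x3 - x1)))) 0 (((x4 - x1)^2 + (y4 - y1)^2)) (((x3 - x2)^2 + (y3 - y2)^2)) = (-8*U2*W3*U4^2 + 2*W1*U2*U4^2 - 6*W3*U4^3 + 6*U1*W3*U4^2 - 8*W2*U3*U4^2 + 6*W2*U4^3 - 6*U1*W2*U4^2 - 2*W1*U3*U4^2 + 8*U3*W3*U4^2 - 4*U1*U3*W3*U4 + 8*U1*W2*U3*U4 + 2*W1*U3^2*U4 + 2*U2*U3^2*W3 - 2*W1*U2*U3^2 - 2*U3^2*W3*U4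 + 2*W2*U3^3 - 2*U1*W2*U3^2 + 6*W1*U2*W4^2 - 6*W3*U4*W4^2 + 2*U1*W3*W4^2 + 6*W2*U4*W4^2 - 2*U1*W2*W4^2 - 6*W1*U3*W4^2 - 8*W1*U2*W3*W4 + 8*W3^2*U4*W4 - 2*U1*W3^2*W4 - 8*W2*W3*U4*W4 + 4*W1*U3*W3*W4 + 2*U2*W3^3 + 2*W1*U2*W3^2 - 2*W3^3*U4 + 2*W2*U3*W3^2 + 2*U1*W2*W3^2 - 2*U3^3*W4 + 8*U2^2*U3*W4 - 2*U3*W3^2*W4 + 2*W1*U2^2*U3 - 4*W1*W2*U3*W3 + 6*W1*W2^2*U3 - 6*U2^3*W4 + 8*U2*W2*W3*W4 - 6*U2*W2^2*W4 + 2*U1*U3^2*W4 - 8*U1*U2*U3*W4 + 6*U1*U2^2*W4 + 2*U1*W2^2*W4 + 8*U2^2*W3*U4 - 8*U2^2*U3*W3 + 6*U2^3*W3 - 8*U2*W2*W3^2 + 6*U2*W2^2*W3 + 4*U1*U2*U3*W3 - 6*U1*U2^2*W3 - 2*U1*W2^2*W3 - 2*W1*U2^2*U4 - 2*W1*W3^2*U4 + 8*W1*W2*W3*U4 - 6*W1*W2^2*U4 + 8*U2*U3*U4*W4 + 2*U3*U4^2*W4 - 4*U1*U3*U4*W4 + 2*U1^2*U3*W4 + 2*U3*W4^3 + 2*W1^2*U3*W4 - 2*U2^2*W2*U3 - 8*U2*W2*U3*U4 + 4*U1*U2*W2*U3 - 2*U1^2*W2*U3 - 2*W1^2*W2*U3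 - 2*W2^3*U3 - 8*U2^2*U4*W4 - 2*U2*U4^2*W4 + 4*U1*U2*U4*W4 - 2*U1^2*U2*W4 - 2*U2*W4^3 - 2*W1^2*U2*W4 + 4*W1*U2*W2*W4 - 2*U1^2*W3*U4 + 4*W1*W3*U4*W4 - 2*W1^2*W3*U4 + 2*U1^2*U2*W3 + 2*W1^2*U2*W3 - 4*W1*U2*W2*W3 + 2*U2^2*W2*U4 + 8*U2*W2*U4^2 - 4*U1*U2*W2*U4 + 2*U1^2*W2*U4 - 4*W1*W2*U4*W4 + 2*W1^2*W2*U4 + 2*W2^3*U4 + 2*U3*W4*k - 2*W2*U3*k - 2*U2*W4*k - 2*W3*U4*k + 2*U2*W3*k + 2*W2*U4*k) * (U1^2+W1^2-k) + (-2*U3*U4^2*W4 - 2*W1*U2*U4^2 + 2*U1*U4^2*W4 - 2*U1*W2*U4^2 + 2*W1*U4^3 + 8*U3^2*U4*W4 - 4*U2*U3*U4*W4 - 8*W1*U3^2*U4 + 8*W1*U2*U3*U4 + 2*W2*U3*U4^2 - 6*U3^3*W4 + 6*U2*U3^2*W4 + 6*W1*U3^3 - 6*W1*U2*U3^2 - 8*U1*U3^2*W4 - 2*W2*U3^2*U4 + 2*U1*W2*U3^2 - 2*U3*W4^3 + 2*W1*U2*W4^2 + 2*U1*W4^3 + 2*U1*W2*W4^2 + 2*W1*U4*W4^2 + 8*U3*W3*W4^2 - 2*U2*W3*W4^2 - 8*W1*U3*W3*W4 + 4*W2*W3*U4*W4 - 8*U1*W2*W3*W4 - 6*U3*W3^2*W4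 + 2*U2*W3^2*W4 + 6*W1*U3*W3^2 - 2*W1*U2*W3^2 - 6*W2*W3^2*U4 + 6*U1*W2*W3^2 - 2*U2^2*U3*W4 + 4*W2*U3*W3*W4 - 2*W2^2*U3*W4 + 8*W1*W2*U3*W4 + 2*W1*U2^2*U3 - 4*W1*W2*U3*W3 + 2*W1*W2^2*U3 + 8*U1*W1*U3^2 - 4*U1*W1*U2*U3 - 4*W1^2*W2*U3 + 2*U1*U2^2*W4 + 2*U1*W2^2*W4 - 4*U1*W1*W2*W4 + 2*U3^2*W3*U4 - 4*U2*U3*W3*U4 + 2*U2^2*W3*U4 + 2*W3^3*U4 + 2*W2^2*W3*U4 + 8*U1*U3*W3*U4 - 8*U1*U2*W3*U4 - 2*U1*U3^2*W3 + 4*U1*U2*U3*W3 - 2*U1*U2^2*W3 - 2*U1*W3^3 - 2*U1*W2^2*W3 + 4*U1*W1*W2*W3 - 2*W1*U2^2*U4 - 2*W1*W2^2*U4 - 8*U1*W1*U3*U4 + 4*U1*W1*U2*U4 + 4*W1^2*W2*U4 - 2*W2*U3*W4^2 + 4*U1*U2*U4*W4 + 4*W1^2*U2*W4 - 8*U1*W1*W4^2 - 2*W3*U4^3 - 2*W3*U4*W4^2 + 2*U2*W3*U4^2 - 4*W1^2*U2*W3 + 8*U1*W1*W3*W4 - 4*W1*W2*U4*W4 + 6*U3*W4*k - 8*W1^2*U3*W4 + 4*W1*U3*k + 8*U1*W4*k - 6*U2*W4*k + 10*W3*U4*k - 8*W1^2*W3*U4 - 8*U1*W3*k - 8*U3*W3*k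 + 8*W1^2*U3*W3 + 6*U2*W3*k - 4*W1*U4*k - 2*W2*U3*k - 8*U4*W4*k + 8*W1^2*U4*W4 + 2*W2*U4*k) * (U2^2+W2^2-k) + (2*U2*U4^2*W4 + 8*W1*U2*U4^2 - 2*U1*U4^2*W4 - 6*W2*U4^3 + 8*U1*W2*U4^2 + 6*W1*U4^3 - 4*U2*U3*U4*W4 + 4*U1*U3*U4*W4 - 8*U1*U2*U4*W4 + 6*W2*U3*U4^2 - 8*U2*W2*U4^2 - 8*U1*W2*U3*U4 + 8*U1*U2*W2*U4 - 6*W1*U3*U4^2 - 6*W2*U4*W4^2 + 8*W1*W2*U4*W4 - 8*U1*W1*U4^2 + 6*W1*U4*W4^2 - 8*W1^2*U4*W4 + 2*U2*U3^2*W4 + 2*U2*W3^2*W4 - 4*U2*W2*W3*W4 - 2*W1*U2*U3^2 - 2*W1*U2*W3^2 + 4*W1*U2*W2*W3 - 2*U1*U3^2*W4 + 8*U1*U2*U3*W4 - 2*U1*W3^2*W4 - 2*W2*U3^2*U4 + 4*U2*W2*U3*U4 - 2*W2*W3^2*U4 + 4*W2^2*W3*U4 + 2*U1*W2*U3^2 - 4*U1*U2*W2*U3 + 2*U1*W2*W3^2 - 4*U1*W2^2*W3 + 2*W1*U3^2*U4 + 2*W1*W3^2*U4 - 8*W1*W2*W3*U4 - 2*U2*W3*U4^2 - 6*U2*W3*W4^2 + 8*W1*U2*W3*W4 - 4*W1^2*U2*W3 + 2*U1*W3*U4^2 + 6*U1*W3*W4^2 - 4*U1*W1*W3*W4 +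 2*W2*U3*W4^2 - 4*W1^2*W2*U3 + 4*U1*W1*U3*U4 - 2*W1*U3*W4^2 + 4*W1^2*U3*W4 + 2*U2*W4^3 - 2*U1*W4^3 + 4*W2*W3*U4*W4 - 4*W1*W3*U4*W4 + 4*W2^2*U3*W4 - 8*W1*U2*W2*W4 - 4*U1*W1*U2*U3 - 4*W1*W2^2*U3 + 8*W1^2*U2*W2 + 4*W1^2*W3*U4 + 4*U1*W1*W2*W3 + 8*U4*W4*k - 8*W2^2*U4*W4 - 4*W1*U4*k + 8*W1*W2^2*U4 + 8*U2*W4*k - 8*U3*W4*k - 10*W1*U2*k + 6*W1*U3*k - 8*U1*W4*k + 8*U1*W2^2*W4 - 4*W2*U4*k + 2*U1*W2*k + 2*U2*W3*k + 2*W2*U3*k + 8*U1*W1*k - 8*U1*W1*W2^2 - 2*U1*W3*k) * (U3^2+W3^2-k) + (4*U2*W3^2*W4 - 4*U2*W2*W3*W4 - 4*U1*W3^2*W4 + 8*U1*W2*W3*W4 - 4*U1*W2^2*W4 + 4*U2*W2*U3*U4 + 4*W2*W3^2*U4 + 4*W2^2*W3*U4 - 8*W1*U2*U3*U4 - 4*W1*W3^2*U4 - 4*W1*W2^2*U4 - 2*U2*W3*U4^2 + 8*U1*U2*W3*U4 - 2*U2*W3*W4^2 + 2*W1*U2*U4^2 - 4*U1*W1*U2*U4 + 2*W1*U2*W4^2 - 4*W1^2*U2*W4 + 2*U1*W3*U4^2 + 2*U1*W3*W4^2 - 4*U1*W1*W3*W4 + 2*W2*U3*U4^2 + 2*W2*U3*W4^2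 - 8*W1*W2*U3*W4 - 2*U1*W2*U4^2 - 2*U1*W2*W4^2 + 4*U1*W1*W2*W4 - 2*W1*U3*U4^2 + 4*U1*W1*U3*U4 - 2*W1*U3*W4^2 + 4*W1^2*U3*W4 - 8*W2^2*U3*W3 + 8*W1*W2*U3*W3 + 4*U2*U3*W3*U4 - 8*U1*U2*U3*W3 + 8*U1*W1*U2*U3 - 4*U1*U3*W3*U4 - 4*W2*U3*W3*W4 + 4*W1*U3*W3*W4 + 4*W2^2*U3*W4 + 4*W1*U2*W2*W4 - 8*U1*W1*W2*W3 + 4*W1^2*W3*U4 - 4*U1*U2*W2*U4 + 8*U1*W1*W2^2 - 4*W1^2*W2*U4 + 10*W1*U2*k - 8*W1*U2*W3^2 - 2*U1*W2*k - 8*U1*W2*W3^2 + 8*W1*U4*k - 10*U2*W3*k + 8*W1^2*U2*W3 + 10*U1*W3*k - 8*W3*U4*k + 8*W1^2*W2*U3 - 10*W1*U3*k + 8*U2*W2*W3^2 + 2*W2*U3*k + 8*U3*W3*k - 8*W1^2*U3*W3 - 8*U1*W1*k + 8*U1*W1*W3^2 - 8*W1^2*U2*W2) * (U4^2+W4^2-k)"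
    unfolding e det3_def by algebra
  also have "... = 0" unfolding z by simp
  finally show ?thesis .
qed

lemma cert3:
  fixes x1 y1 x2 y2 x3 y3 x4 y4 cx cy k :: real
  assumes h1: "(x1-cx)^2+(y1-cy)^2=k" and h2: "(x2-cx)^2+(y2-cy)^2=k" and h3: "(x3-cx)^2+(y3-cy)^2=k" and h4: "(x4-cx)^2+(y4-cy)^2=k"
  shows "det3 (((x3 - x2)^2 + (y3 - y2)^2)) ((2 * ((x2 - x1) * (y3 - y1) - (y2 - y1) * (x3 - x1)))) ((2 * ((x3 - x2) * (y4 - y2) - (y3 - y2) * (x4 - x2)))) (- ((x4 - x1)^2 + (y4 - y1)^2)) ((2 * ((x3 - x1) * (y4 - y1) - (y3 - y1) * (x4 - x1)))) ((2 * ((x2 - x1) * (y4 - y1) - (y2 - y1) * (x4 - x1)))) 0 (((x3 - x1)^2 + (y3 - y1)^2)) (((x4 - x2)^2 + (y4 - y2)^2)) = 0"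
proof -
  define U1 where "U1 = x1 - cx"
  define U2 where "U2 = x2 - cx"
  define U3 where "U3 = x3 - cx"
  define U4 where "U4 = x4 - cx"
  define W1 where "W1 = y1 - cy"
  define W2 where "W2 = y2 - cy"
  define W3 where "W3 = y3 - cy"
  define W4 where "W4 = y4 - cy"
  have e: "x1 = U1 + cx" "x2 = U2 + cx" "x3 = U3 + cx" "x4 = U4 + cx" "y1 = W1 + cy" "y2 = W2 + cy" "y3 = W3 + cy" "y4 = W4 + cy" by (simp_all add: U1_def U2_def U3_def U4_def W1_def W2_def W3_def W4_def)
  have z: "U1^2+W1^2-k = 0" "U2^2+W2^2-k = 0" "U3^2+W3^2-k = 0" "U4^2+W4^2-k = 0" using h1 h2 h3 h4 by (simp_all add: U1_def U2_def U3_def U4_def W1_def W2_def W3_def W4_def)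
  have "det3 (((x3 - x2)^2 + (y3 - y2)^2)) ((2 * ((x2 - x1) * (y3 - y1) - (y2 - y1) * (x3 - x1)))) ((2 * ((x3 - x2) * (y4 - y2) - (y3 - y2) * (x4 - x2)))) (- ((x4 - x1)^2 + (y4 - y1)^2)) ((2 * ((x3 - x1) * (y4 - y1) - (y3 - y1) * (x4 - x1)))) ((2 * ((x2 - x1) * (y4 - y1) - (y2 - y1) * (x4 - x1)))) 0 (((x3 - x1)^2 + (y3 - y1)^2)) (((x4 - x2)^2 + (y4 - y2)^2)) = (8*U2*U3^2*W4 + 2*W1*U2*U3^2 - 6*U3^3*W4 + 6*U1*U3^2*W4 + 8*W2*U3^2*U4 + 6*W2*U3^3 - 6*U1*W2*U3^2 - 2*W1*U3^2*U4 - 2*W1*U2^2*U3 - 8*U1*U2*U3*W4 - 8*U2*W2*U3^2 + 4*U1*U2*W2*U3 - 2*U2^3*W4 + 2*U1*U2^2*W4 - 2*U2^2*W2*U4 + 2*U2^2*W2*U3 + 2*W1*U2^2*U4 + 6*W1*U2*W3^2 - 6*U3*W3^2*W4 + 2*U1*W3^2*W4 + 6*W2*U3*W3^2 - 2*U1*W2*W3^2 - 6*W1*W3^2*U4 - 4*W1*U2*W2*W3 + 8*W2*U3*W3*W4 - 8*W2^2*U3*W3 + 2*U1*W2^2*W3 + 8*W1*W2*W3*U4 - 2*U2*W2^2*W4 - 2*U1*W2^2*W4 - 2*W2^3*U4 + 2*W2^3*U3 - 2*W1*W2^2*U4 - 8*U2*W3*U4^2 + 2*U2^3*W3 + 2*U2*W2^2*W3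 - 2*W1*U2*U4^2 - 6*W1*U2*W4^2 + 4*W1*U2*W2*W4 + 6*W3*U4^3 + 6*W3*U4*W4^2 - 8*W2*W3*U4*W4 - 6*U1*W3*U4^2 + 8*U1*U2*W3*U4 - 2*U1*U2^2*W3 - 2*U1*W3*W4^2 - 8*W2*U3*U4^2 - 6*W2*U4^3 + 8*U2*W2*U4^2 - 6*W2*U4*W4^2 + 8*W2^2*U4*W4 + 6*U1*W2*U4^2 - 4*U1*U2*W2*U4 + 2*U1*W2*W4^2 + 2*W1*U3*U4^2 + 6*W1*U3*W4^2 - 8*W1*W2*U3*W4 + 2*W1*W2^2*U3 - 2*U3*U4^2*W4 - 8*U3^2*U4*W4 + 4*U1*U3*U4*W4 - 2*U1^2*U3*W4 + 4*W1*U3*W3*W4 - 2*W1^2*U3*W4 - 2*U3*W4^3 + 2*U1^2*W2*U3 - 4*W1*W2*U3*W3 + 2*W1^2*W2*U3 + 2*U2*U4^2*W4 + 8*U2*U3*U4*W4 - 4*U1*U2*U4*W4 + 2*U1^2*U2*W4 + 2*W1^2*U2*W4 + 2*U2*W4^3 + 8*U3*W3*U4^2 + 2*U3^2*W3*U4 - 4*U1*U3*W3*U4 + 2*U1^2*W3*U4 + 2*W3^3*U4 + 2*W1^2*W3*U4 - 4*W1*W3*U4*W4 - 8*U2*U3*W3*U4 - 2*U2*U3^2*W3 + 4*U1*U2*U3*W3 - 2*U1^2*U2*W3 - 2*U2*W3^3 - 2*W1^2*U2*W3 - 2*U1^2*W2*U4 - 2*W1^2*W2*U4 + 4*W1*W2*U4*W4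 - 2*U3*W4*k + 2*W2*U3*k + 2*U2*W4*k + 2*W3*U4*k - 2*U2*W3*k - 2*W2*U4*k) * (U1^2+W1^2-k) + (6*U3^3*W4 - 6*W1*U3^3 - 8*U1*U3^2*W4 - 2*U3^2*W3*U4 + 2*U1*U3^2*W3 - 8*W1*U3^2*U4 + 8*U3^2*U4*W4 - 6*U2*U3^2*W4 + 6*W1*U2*U3^2 - 8*U1*U3*U4*W4 + 8*U1*U2*U3*W4 - 8*U3*W3*U4^2 + 4*U2*U3*W3*U4 + 8*U1*U3*W3*U4 - 4*U1*U2*U3*W3 + 8*W1*U3*U4^2 + 6*U3*W3^2*W4 - 8*W1*U3*W3*W4 + 8*U1*W1*U3^2 - 6*W1*U3*W3^2 + 8*W1^2*U3*W3 + 2*U3*U4^2*W4 - 4*U2*U3*U4*W4 + 2*U2^2*U3*W4 + 2*U3*W4^3 - 6*W2*U3*W4^2 + 2*W2^2*U3*W4 - 2*W1*U2^2*U3 + 8*W1*W2*U3*W4 - 2*W1*W2^2*U3 - 2*U1*U4^2*W4 + 4*U1*U2*U4*W4 - 2*U1*U2^2*W4 - 2*U1*W4^3 + 6*U1*W2*W4^2 - 2*U1*W2^2*W4 - 6*W3*U4^3 + 6*U2*W3*U4^2 - 2*U2^2*W3*U4 - 6*W3*U4*W4^2 + 4*W2*W3*U4*W4 - 2*W2^2*W3*U4 + 8*U1*W3*U4^2 - 8*U1*U2*W3*U4 + 2*U1*U2^2*W3 + 2*U1*W2^2*W3 + 6*W1*U4^3 - 6*W1*U2*U4^2 + 2*W1*U2^2*U4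 + 6*W1*U4*W4^2 - 4*W1*W2*U4*W4 + 2*W1*W2^2*U4 - 2*U2*W3^2*W4 + 4*W1^2*U2*W4 - 4*U1*W1*U2*U3 + 2*W1*U2*W3^2 - 4*W1^2*U2*W3 + 2*W2*U3^2*U4 + 6*W2*W3^2*U4 - 8*W1*W2*W3*U4 + 4*W1^2*W2*U4 - 2*U1*W2*U3^2 - 6*U1*W2*W3^2 + 4*U1*W1*W2*W3 - 2*W3^3*U4 + 2*U1*W3^3 - 4*W2*U3*W3*W4 + 4*W1*W2*U3*W3 + 2*U2*W3*W4^2 + 8*W1*W3*U4*W4 - 8*U1*W1*U4^2 + 4*U1*W1*U2*U4 - 2*W1*U2*W4^2 - 8*W1^2*U4*W4 - 2*W2*U3*U4^2 - 4*W1^2*W2*U3 + 2*U1*W2*U4^2 - 4*U1*W1*W2*W4 - 4*W1*U3*k + 2*U3*W4*k - 2*W3*U4*k + 4*W1*U4*k - 2*U2*W4*k - 2*W2*U4*k + 2*W2*U3*k + 2*U2*W3*k) * (U2^2+W2^2-k) + (-4*U2*U3*U4*W4 - 2*W2*U3*W4^2 - 4*W2^2*U3*W4 - 2*W1*U3*U4^2 + 8*W1*U2*U3*U4 + 2*W1*U3*W4^2 + 4*W1*W2^2*U3 + 2*U1*U4^2*W4 + 2*U1*W4^3 + 2*U2*W3*U4^2 + 4*W2*W3*U4*W4 - 4*W2^2*W3*U4 - 2*U1*W3*U4^2 + 2*U1*W3*W4^2 - 8*U1*W2*W3*W4 + 4*U1*W2^2*W3 + 2*W1*U4^3 + 2*W1*U4*W4^2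 - 2*U2*U3^2*W4 - 2*U2*W3^2*W4 + 8*W1*U2*W3*W4 + 2*W1*U2*U3^2 - 4*U1*W1*U2*U3 + 2*W1*U2*W3^2 - 4*W1^2*U2*W3 + 2*U1*U3^2*W4 + 2*U1*W3^2*W4 - 4*U1*W1*W3*W4 + 2*W2*U3^2*U4 - 8*U1*W2*U3*U4 + 2*W2*W3^2*U4 - 2*U1*W2*U3^2 - 2*U1*W2*W3^2 + 4*U1*W1*W2*W3 - 2*W1*U3^2*U4 + 4*U1*W1*U3*U4 - 2*W1*W3^2*U4 + 4*W1^2*W3*U4 - 2*U2*U4^2*W4 - 2*U2*W4^3 + 8*U2*W2*W4^2 - 8*W1*U2*W2*W4 - 4*U2*W2*U3*U4 + 8*U1*U2*W2*U4 + 4*U1*U2*W2*U3 - 8*U1*W1*U2*U4 + 4*U2*W2*W3*W4 - 4*W1*U2*W2*W3 + 4*U1*U3*U4*W4 - 8*U1*W1*W4^2 + 4*W1^2*U3*W4 + 2*W2*U3*U4^2 + 8*U1*W1*W2*W4 - 4*W1^2*W2*U3 - 4*W1*W3*U4*W4 - 2*U2*W3*W4^2 - 2*W2*U4^3 - 2*W2*U4*W4^2 - 6*W1*U3*k + 8*U1*W2^2*W4 + 2*U1*W3*k - 12*W1*U4*k + 8*W1*W2^2*U4 - 8*W1^2*U2*W4 + 10*W1*U2*k + 12*W2*U4*k - 8*W1^2*W2*U4 - 10*U1*W2*k + 6*W2*U3*k - 8*W2^2*U4*W4 + 8*U1*W1*k - 8*U1*W1*W2^2 - 8*U2*W2*k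 + 8*W1^2*U2*W2 + 8*W1^2*U4*W4 - 2*U2*W3*k) * (U3^2+W3^2-k) + (4*U2*U3*W3*U4 - 8*W1*U2*U3*U4 - 4*U1*W3^2*W4 - 4*W1*W3^2*U4 - 4*W2*U3*W3*W4 + 8*U1*W2*W3*W4 + 4*W2*W3^2*U4 - 8*U2*W2*W3^2 + 8*W1*U2*W2*W3 + 4*W2^2*U3*W4 - 4*U1*W2^2*W4 + 4*W2^2*W3*U4 - 4*W1*W2^2*U4 + 2*U2*W3*U4^2 + 2*U2*W3*W4^2 - 4*U2*W2*W3*W4 - 8*W1*U2*W3*W4 - 2*W1*U2*U4^2 - 2*W1*U2*W4^2 + 4*W1*U2*W2*W4 + 4*U1*W1*U2*U4 + 4*W1^2*U2*W4 - 2*U1*W3*U4^2 - 2*U1*W3*W4^2 + 4*U1*W1*W3*W4 - 2*W2*U3*U4^2 + 4*U2*W2*U3*U4 - 2*W2*U3*W4^2 + 8*U1*W2*U3*U4 - 8*U1*U2*W2*U3 + 2*U1*W2*U4^2 - 4*U1*U2*W2*U4 + 2*U1*W2*W4^2 - 4*U1*W1*W2*W4 + 2*W1*U3*U4^2 + 2*W1*U3*W4^2 - 4*U1*W1*U3*U4 + 8*U1*W1*U2*U3 - 4*W1^2*U3*W4 + 4*W1*U3*W3*W4 + 4*U2*W3^2*W4 - 4*U1*U3*W3*U4 - 4*W1^2*W3*U4 + 8*U1*W1*W3^2 + 4*W1^2*W2*U4 - 8*U1*W1*W2*W3 + 10*W1*U3*k + 2*U2*W3*k - 2*U1*W3*k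 + 8*W1*U4*k + 8*W2^2*U3*W3 - 8*W1*W2^2*U3 - 8*U1*W2^2*W3 - 10*W1*U2*k + 8*W1^2*U2*W3 - 8*U1*W1*k + 8*U1*W1*W2^2 - 10*W2*U3*k + 8*W1^2*W2*U3 + 10*U1*W2*k - 8*W2*U4*k + 8*U2*W2*k - 8*W1^2*U2*W2 - 8*W1^2*U3*W3) * (U4^2+W4^2-k)"
    unfolding e det3_def by algebra
  also have "... = 0" unfolding z by simp
  finally show ?thesis .
qed


lemma gen4:
  fixes px py :: "nat \<Rightarrow> real" and cx cy k :: real and p1 p2 p3 p4 :: nat
  assumes "(px p1-cx)^2+(py p1-cy)^2=k" "(px p2-cx)^2+(py p2-cy)^2=k"
          "(px p3-cx)^2+(py p3-cy)^2=k" "(px p4-cx)^2+(py p4-cy)^2=k"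
  shows "let x = sqd px py; S = Sarea px py in
     det3 (x p3 p4) (S p1 p3 p4) (S p2 p3 p4)
          (- x p1 p2) (S p1 p2 p3) (S p1 p2 p4)
          0 (x p1 p3) (x p2 p4) = 0 \<and>
     det3 (x p3 p4) (S p1 p3 p4) (S p2 p3 p4)
          (x p1 p2) (S p1 p2 p4) (S p1 p2 p3)
          0 (x p1 p4) (x p2 p3) = 0 \<and>
     det3 (x p2 p3) (S p1 p2 p3) (S p2 p3 p4)
          (- x p1 p4) (S p1 p3 p4) (S p1 p2 p4)
          0 (x p1 p3) (x p2 p4) = 0"
  unfolding Let_def sqd_def Sarea_def
  using cert1[OF assms] cert2[OF assms] cert3[OF assms] by blast

theorem corollary2p7:
  fixes n :: nat and px py :: "nat \<Rightarrow> real" and a b :: nat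
  assumes "n \<ge> 3"
    and "cyclic_anticlockwise n px py"
    and "a \<in> {1..n}" and "b \<in> {1..n}"
  shows "let x = sqd px py; S = Sarea px py; a1 = modn n (a + 1); b1 = modn n (b + 1) in
     det3 (x b b1) (S a b b1) (S a1 b b1)
          (- x a a1) (S a a1 b) (S a a1 b1)
          0 (x a b) (x a1 b1) = 0 \<and>
     det3 (x b b1) (S a b b1) (S a1 b b1)
          (x a a1) (S a a1 b1) (S a a1 b)
          0 (x a b1) (x a1 b) = 0 \<and>
     det3 (x a1 b) (S a a1 b) (S a1 b b1)
          (- x a b1) (S a b b1) (S a a1 b1)
          0 (x a b) (x a1 b1) = 0"
proof -
  obtain cx cy r and th :: "nat \<Rightarrow> real" where r: "r > 0"
    and P: "\<forall>i\<in>{1..n}. px i = cx + r * cos (th i) \<and> py i = cy + r * sin (th i)"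
    using assms(2) unfolding cyclic_anticlockwise_def by blast
  have on: "(px i - cx)^2 + (py i - cy)^2 = r^2" if "i \<in> {1..n}" for i
  proof -
    have "(px i - cx)^2 + (py i - cy)^2 = r^2 * ((cos (th i))^2 + (sin (th i))^2)"
    proof -
      from P that have "px i - cx = r * cos (th i)" "py i - cy = r * sin (th i)" by auto
      then show ?thesis by (simp add: power_mult_distrib flip: distrib_left)
    qed
    then show ?thesis by simp
  qed
  have m: "modn n k \<in> {1..n}" for k
    using assms(1) unfolding modn_def by (auto simp: Suc_le_eq)
  show ?thesis
    using gen4[OF on[OF assms(3)] on[OF m[of "a+1"]] on[OF assms(4)] on[OF m[of "b+1"]]]
    by (simp add: Let_def)
qed

end
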